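(* Let $\mathcal I$ and $\mathcal J$ be ideals on $\omega$ and let $X$ be a nonempty normal space. The following are equivalent: (1) $|X|<\omega$ and $\mathcal I\subseteq\mathcal J$; (2) for every sequence $(f_n)$ in $\mathcal C(X)$: $\mathcal I$-pointwise convergence to $0$ implies $\mathcal J$-uniform convergence to $0$; (3) for every $(f_n)$ in $\mathcal C(X)$: $\mathcal I$-quasi-normal convergence to $0$ implies $\mathcal J$-uniform convergence to $0$; (4) for every $(f_n)$ in $\mathcal C(X)$: $\mathcal I$-$\sigma$-uniform convergence to $0$ implies $\mathcal J$-uniform convergence to $0$.
   Context: An ideal on $\omega$ is a family $\mathcal I\subseteq\mathcal P(\omega)$ closed under finite unions and subsets, containing all finite sets, with $\omega\notin\mathcal I$. A real sequence $(a_n)$ is $\mathcal I$-convergent to $0$ if $\{n:|a_n|\ge\varepsilon\}\in\mathcal I$ for all $\varepsilon>0$. For a sequence $(f_n)$ of real functions on a set $X$: $\mathcal I$-pointwise convergence to $0$ means $(f_n(x))$ is $\mathcal I$-convergent to $0$ for each $x$; $\mathcal I$-uniform means $\{n:\exists x\in X\,(|f_n(x)|\ge\varepsilon)\}\in\mathcal I$ for each $\varepsilon>0$; $\mathcal I$-$\sigma$-uniform means $X=\bigcup_{k\in\omega}X_k$ with $(f_n\restriction X_k)$ $\mathcal I$-uniformly convergent to $0$ for each $k$; $\mathcal I$-quasi-normal means there is a sequence $(\varepsilon_n)$ of positive reals $\mathcal I$-convergent to $0$ with $\{n:|f_n(x)|\ge\varepsilon_n\}\in\mathcal I$ for each $x$.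 $\mathcal C(X)$ = continuous real functions on $X$. A normal space is a Hausdorff space in which disjoint closed sets have disjoint open neighbourhoods. *)

theory Defs
  imports "HOL-Analysis.Analysis"
begin

definition ideal_on_nat :: "nat set set \<Rightarrow> bool" where
  "ideal_on_nat I \<longleftrightarrow>
     (\<forall>A\<in>I. \<forall>B\<in>I. A \<union> B \<in> I) \<and>
     (\<forall>A\<in>I. \<forall>B. B \<subseteq> A \<longrightarrow> B \<in> I) \<and>
     (\<forall>A. finite A \<longrightarrow> A \<in> I) \<and>
     UNIV \<notin> I"

definition I_conv0 :: "nat set set \<Rightarrow> (nat \<Rightarrow> real) \<Rightarrow> bool" where
  "I_conv0 I a \<longleftrightarrow> (\<forall>\<epsilon>>0. {n. \<bar>a n\<bar> \<ge> \<epsilon>} \<in> I)"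

definition I_pointwise0 :: "nat set set \<Rightarrow> 'a set \<Rightarrow> (nat \<Rightarrow> 'a \<Rightarrow> real) \<Rightarrow> bool" where
  "I_pointwise0 I S f \<longleftrightarrow> (\<forall>x\<in>S. I_conv0 I (\<lambda>n. f n x))"

definition I_uniform0 :: "nat set set \<Rightarrow> 'a set \<Rightarrow> (nat \<Rightarrow> 'a \<Rightarrow> real) \<Rightarrow> bool" where
  "I_uniform0 I S f \<longleftrightarrow> (\<forall>\<epsilon>>0. {n. \<exists>x\<in>S. \<bar>f n x\<bar> \<ge> \<epsilon>} \<in> I)"

definition I_sigma_uniform0 :: "nat set set \<Rightarrow> 'a set \<Rightarrow> (nat \<Rightarrow> 'a \<Rightarrow> real) \<Rightarrow> bool" where
  "I_sigma_uniform0 I S f \<longleftrightarrow>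
     (\<exists>Xk :: nat \<Rightarrow> 'a set. S = (\<Union>k. Xk k) \<and> (\<forall>k. I_uniform0 I (Xk k) f))"

definition I_quasi_normal0 :: "nat set set \<Rightarrow> 'a set \<Rightarrow> (nat \<Rightarrow> 'a \<Rightarrow> real) \<Rightarrow> bool" where
  "I_quasi_normal0 I S f \<longleftrightarrow>
     (\<exists>e :: nat \<Rightarrow> real. (\<forall>n. e n > 0) \<and> I_conv0 I e \<and>
        (\<forall>x\<in>S. {n. \<bar>f n x\<bar> \<ge> e n} \<in> I))"

definition normal_T2_space :: "'a topology \<Rightarrow> bool" where
  "normal_T2_space X \<longleftrightarrow> Hausdorff_space X \<and> normal_space X"

end

theory Submission
  imports Defs
begin

lemma step_exists:
  assumes H: "Hausdorff_space X" and W: "openin X W" and inf: "infinite W"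
  shows "\<exists>U W'. openin X U \<and> U \<noteq> {} \<and> openin X W' \<and> infinite W' \<and> U \<subseteq> W \<and> W' \<subseteq> W \<and> U \<inter> W' = {}"
proof -
  have t1: "t1_space X" using H Hausdorff_imp_t1_space by blast
  have WT: "W \<subseteq> topspace X" using W openin_subset by blast
  obtain a where a: "a \<in> W" using inf by (metis ex_in_conv finite.emptyI)
  show ?thesis
  proof (cases "openin X {a}")
    case True
    have "openin X (W - {a})"
      using W closedin_t1_singleton[OF t1] a WT by (meson openin_diff subsetD)
    moreover have "infinite (W - {a})" using inf by simp
    ultimately show ?thesis using True a by (intro exI[of _ "{a}"] exI[of _ "W - {a}"]) auto
  next
    case False
    obtain b where b: "b \<in> W" "b \<noteq> a"
      using inf by (metis finite.emptyI finite_insert insertCI subsetI finite_subset)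
    obtain A B where AB: "openin X A" "openin X B" "a \<in> A" "b \<in> B" "disjnt A B"
      using H a b WT unfolding Hausdorff_space_def by (metis subsetD)
    have inA: "infinite (A \<inter> W)"
    proof
      assume fin: "finite (A \<inter> W)"
      have "closedin X (A \<inter> W - {a})"
        using t1 fin WT unfolding t1_space_closedin_finite by auto
      then have "openin X ((A \<inter> W) - (A \<inter> W - {a}))"
        using AB W by (intro openin_diff) auto
      moreover have "(A \<inter> W) - (A \<inter> W - {a}) = {a}" using a AB by auto
      ultimately show False using False by simp
    qed
    have "openin X (B \<inter> W)" "openin X (A \<inter> W)" using AB W by auto
    moreover have "B \<inter> W \<noteq> {}" using AB b by blast
    moreover have "(B \<inter> W) \<inter> (A \<inter> W) = {}" using AB(5) by (auto simp: disjnt_def)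
    ultimately show ?thesis using inA
      by (intro exI[of _ "B \<inter> W"] exI[of _ "A \<inter> W"] conjI) auto
  qed
qed

lemma cellular:
  assumes H: "Hausdorff_space X" and inf: "infinite (topspace X)"
  shows "\<exists>U :: nat \<Rightarrow> 'a set. (\<forall>n. openin X (U n) \<and> U n \<noteq> {}) \<and> (\<forall>m n. m \<noteq> n \<longrightarrow> U m \<inter> U n = {})"
proof -
  define step where "step = (\<lambda>W. SOME p. openin X (fst p) \<and> fst p \<noteq> {} \<and> openin X (snd p) \<and> infinite (snd p)
        \<and> fst p \<subseteq> W \<and> snd p \<subseteq> W \<and> fst p \<inter> snd p = {})"
  have stepP: "openin X (fst (step W)) \<and> fst (step W) \<noteq> {} \<and> openin X (snd (step W)) \<and> infinite (snd (step W))
        \<and> fst (step W) \<subseteq> W \<and> snd (step W) \<subseteq> W \<and> fst (step W) \<inter> snd (step W) = {}"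
    if hW: "openin X W" "infinite W" for W
  proof -
    obtain U W' where "openin X U \<and> U \<noteq> {} \<and> openin X W' \<and> infinite W' \<and> U \<subseteq> W \<and> W' \<subseteq> W \<and> U \<inter> W' = {}"
      using step_exists[OF H hW] by blast
    then have "\<exists>p. openin X (fst p) \<and> fst p \<noteq> {} \<and> openin X (snd p) \<and> infinite (snd p)
        \<and> fst p \<subseteq> W \<and> snd p \<subseteq> W \<and> fst p \<inter> snd p = {}" by (intro exI[of _ "(U, W')"]) auto
    then show ?thesis unfolding step_def by (rule someI_ex)
  qed
  define Ws where "Ws = rec_nat (topspace X) (\<lambda>_ W. snd (step W))"
  have Ws0: "Ws 0 = topspace X" and WsS: "\<And>n. Ws (Suc n) = snd (step (Ws n))" by (simp_all add: Ws_def)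
  have inv: "openin X (Ws n) \<and> infinite (Ws n)" for n
  proof (induction n)
    case 0 show ?case using inf by (simp add: Ws0)
  next
    case (Suc n) then show ?case using stepP[of "Ws n"] by (simp add: WsS)
  qed
  define U where "U n = fst (step (Ws n))" for n
  have dec: "Ws n \<subseteq> Ws m" if "m \<le> n" for m n
    using that
  proof (induction n)
    case 0 then show ?case by simp
  next
    case (Suc n)
    have "Ws (Suc n) \<subseteq> Ws n" using stepP[OF conjunct1[OF inv[of n]] conjunct2[OF inv[of n]]] WsS[of n]
      by simp
    then show ?case using Suc by (cases "m = Suc n") (auto simp: le_Suc_eq)
  qed
  have disj: "U m \<inter> U n = {}" if "m < n" for m n
  proof -
    have "U n \<subseteq> Ws n" using stepP[OF conjunct1[OF inv[of n]] conjunct2[OF inv[of n]]] U_def by simp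
    also have "\<dots> \<subseteq> Ws (Suc m)" using dec that by simp
    finally show ?thesis using stepP[OF conjunct1[OF inv[of m]] conjunct2[OF inv[of m]]] WsS[of m] U_def by auto
  qed
  show ?thesis
    apply (rule exI[of _ U], intro conjI allI impI)
    using stepP inv U_def apply simp
    using stepP inv U_def apply simp
    by (metis disj inf_commute linorder_neqE_nat)
qed


lemma ideal_union: "ideal_on_nat I \<Longrightarrow> A \<in> I \<Longrightarrow> B \<in> I \<Longrightarrow> A \<union> B \<in> I"
  unfolding ideal_on_nat_def by blast
lemma ideal_sub: "ideal_on_nat I \<Longrightarrow> A \<in> I \<Longrightarrow> B \<subseteq> A \<Longrightarrow> B \<in> I"
  unfolding ideal_on_nat_def by blast
lemma ideal_fin: "ideal_on_nat I \<Longrightarrow> finite A \<Longrightarrow> A \<in> I"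
  unfolding ideal_on_nat_def by blast
lemma ideal_UNIV: "ideal_on_nat I \<Longrightarrow> UNIV \<notin> I"
  unfolding ideal_on_nat_def by blast

lemma ideal_UN:
  assumes "ideal_on_nat I" "finite S" "\<forall>x\<in>S. A x \<in> I"
  shows "(\<Union>x\<in>S. A x) \<in> I"
  using assms(2,3)
proof (induction S rule: finite_induct)
  case empty then show ?case using ideal_fin[OF assms(1)] by simp
next
  case (insert x F) then show ?case using ideal_union[OF assms(1)] by simp
qed

lemma qn_pw:
  assumes "ideal_on_nat I" "I_quasi_normal0 I S f"
  shows "I_pointwise0 I S f"
  unfolding I_pointwise0_def I_conv0_def
proof (intro ballI allI impI)
  fix x and \<epsilon> :: real
  assume x: "x \<in> S" and e: "\<epsilon> > 0"
  obtain e where ep: "\<forall>n. e n > 0" "I_conv0 I e" "\<forall>x\<in>S. {n. \<bar>f n x\<bar> \<ge> e n} \<in> I"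
    using assms(2) unfolding I_quasi_normal0_def by blast
  have "{n. \<bar>f n x\<bar> \<ge> \<epsilon>} \<subseteq> {n. \<bar>f n x\<bar> \<ge> e n} \<union> {n. \<bar>e n\<bar> \<ge> \<epsilon>}"
  proof
    fix n assume "n \<in> {n. \<bar>f n x\<bar> \<ge> \<epsilon>}"
    then have "\<epsilon> \<le> \<bar>f n x\<bar>" by simp
    then have "e n \<le> \<bar>f n x\<bar> \<or> \<epsilon> \<le> \<bar>e n\<bar>" by linarith
    then show "n \<in> {n. \<bar>f n x\<bar> \<ge> e n} \<union> {n. \<bar>e n\<bar> \<ge> \<epsilon>}" by simp
  qed
  moreover have "{n. \<bar>e n\<bar> \<ge> \<epsilon>} \<in> I" using ep(2) e unfolding I_conv0_def by blast
  ultimately show "{n. \<bar>f n x\<bar> \<ge> \<epsilon>} \<in> I"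
    using ideal_sub[OF assms(1) ideal_union[OF assms(1) bspec[OF ep(3) x]]] by blast
qed

lemma su_pw:
  assumes "ideal_on_nat I" "I_sigma_uniform0 I S f"
  shows "I_pointwise0 I S f"
  unfolding I_pointwise0_def I_conv0_def
proof (intro ballI allI impI)
  fix x and \<epsilon> :: real
  assume x: "x \<in> S" and e: "\<epsilon> > 0"
  define Xk where "Xk = (SOME Xk :: nat \<Rightarrow> 'a set. S = (\<Union>k. Xk k) \<and> (\<forall>k. I_uniform0 I (Xk k) f))"
  have "S = (\<Union>k. Xk k) \<and> (\<forall>k. I_uniform0 I (Xk k) f)"
    unfolding Xk_def using assms(2) unfolding I_sigma_uniform0_def by (rule someI_ex)
  then have Xk: "S = (\<Union>k. Xk k)" "\<forall>k. I_uniform0 I (Xk k) f" by blast+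
  have "x \<in> (\<Union>k. Xk k)" using Xk(1) x by simp
  then obtain k where k: "x \<in> Xk k" by blast
  have "{n. \<bar>f n x\<bar> \<ge> \<epsilon>} \<subseteq> {n. \<exists>y\<in>Xk k. \<bar>f n y\<bar> \<ge> \<epsilon>}" using k by auto
  moreover have "{n. \<exists>y\<in>Xk k. \<bar>f n y\<bar> \<ge> \<epsilon>} \<in> I" using Xk(2) e unfolding I_uniform0_def by blast
  ultimately show "{n. \<bar>f n x\<bar> \<ge> \<epsilon>} \<in> I" using ideal_sub[OF assms(1)] by blast
qed

lemma fin_unif:
  assumes "ideal_on_nat I" "I \<subseteq> J" "finite S" "I_pointwise0 I S f"
  shows "I_uniform0 J S f"
  unfolding I_uniform0_def
proof (intro allI impI)
  fix \<epsilon> :: real assume e: "\<epsilon> > 0"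
  have "{n. \<exists>x\<in>S. \<bar>f n x\<bar> \<ge> \<epsilon>} = (\<Union>x\<in>S. {n. \<bar>f n x\<bar> \<ge> \<epsilon>})" by auto
  also have "\<dots> \<in> I" using assms(4) e unfolding I_pointwise0_def I_conv0_def
    by (intro ideal_UN[OF assms(1,3)]) blast
  finally show "{n. \<exists>x\<in>S. \<bar>f n x\<bar> \<ge> \<epsilon>} \<in> J" using assms(2) by blast
qed

lemma finite_inv_le:
  assumes "\<epsilon> > (0::real)"
  shows "finite {n::nat. 1 / (real n + 1) \<ge> \<epsilon>}"
proof -
  have "{n::nat. 1 / (real n + 1) \<ge> \<epsilon>} \<subseteq> {..nat \<lceil>1/\<epsilon>\<rceil>}"
  proof
    fix n assume "n \<in> {n::nat. 1 / (real n + 1) \<ge> \<epsilon>}"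
    then have "\<epsilon> * (real n + 1) \<le> 1" by (simp add: field_simps)
    then have "real n \<le> 1/\<epsilon>" using assms by (simp add: field_simps)
    moreover have "1/\<epsilon> \<le> real (nat \<lceil>1/\<epsilon>\<rceil>)" by linarith
    ultimately have "real n \<le> real (nat \<lceil>1/\<epsilon>\<rceil>)" by linarith
    then show "n \<in> {..nat \<lceil>1/\<epsilon>\<rceil>}" by simp
  qed
  then show ?thesis using finite_subset by blast
qed

lemma at_most_one_finite:
  assumes "\<forall>m n. P m \<and> P n \<longrightarrow> m = (n::nat)"
  shows "finite {n. P n}"
proof (cases "\<exists>n. P n")
  case True
  then obtain k where "P k" by blast
  then have "{n. P n} \<subseteq> {k}" using assms by blast
  then show ?thesis using finite_subset by blast
qed simp


lemma infinite_counter: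
  assumes I: "ideal_on_nat I" and J: "ideal_on_nat J"
    and H: "Hausdorff_space X" and N: "normal_space X" and inf: "infinite (topspace X)"
  shows "\<exists>f :: nat \<Rightarrow> 'a \<Rightarrow> real. (\<forall>n. continuous_map X euclideanreal (f n)) \<and>
           I_quasi_normal0 I (topspace X) f \<and> I_sigma_uniform0 I (topspace X) f \<and>
           \<not> I_uniform0 J (topspace X) f"
proof -
  obtain U :: "nat \<Rightarrow> 'a set" where U: "\<forall>n. openin X (U n) \<and> U n \<noteq> {}"
      "\<forall>m n. m \<noteq> n \<longrightarrow> U m \<inter> U n = {}"
    using cellular[OF H inf] by blast
  define x where "x n = (SOME y. y \<in> U n)" for n
  have xU: "x n \<in> U n" for n unfolding x_def using U(1) by (simp add: some_in_eq)
  have xT: "x n \<in> topspace X" for n using xU U(1) openin_subset by blast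
  have t1: "t1_space X" using H Hausdorff_imp_t1_space by blast
  have "\<exists>g. continuous_map X euclideanreal g \<and> g ` {x n} \<subseteq> {1} \<and> g ` (topspace X - U n) \<subseteq> {0}" for n
  proof -
    have "closedin X {x n}" using closedin_t1_singleton[OF t1 xT] .
    moreover have "closedin X (topspace X - U n)" using U(1) by blast
    moreover have "disjnt {x n} (topspace X - U n)" using xU by (simp add: disjnt_def)
    ultimately show ?thesis using Urysohn_lemma_alt[OF N] by metis
  qed
  then obtain f where f: "\<And>n. continuous_map X euclideanreal (f n)"
    "\<And>n. f n (x n) = 1" "\<And>n y. y \<in> topspace X - U n \<Longrightarrow> f n y = 0"
    by (metis image_subset_iff insertCI singletonD)
  have supp: "y \<in> U n" if "y \<in> topspace X" "f n y \<noteq> 0" for y n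
    using f(3)[of y n] that by blast
  have one: "m = n" if "y \<in> topspace X" "f m y \<noteq> 0" "f n y \<noteq> 0" for y m n
    using supp[OF that(1,2)] supp[OF that(1,3)] U(2) by blast
  define e where "e n = 1 / (real n + 1)" for n
  have qn: "I_quasi_normal0 I (topspace X) f"
    unfolding I_quasi_normal0_def
  proof (intro exI[of _ e] conjI allI ballI)
    show "e n > 0" for n unfolding e_def by simp
    show "I_conv0 I e" unfolding I_conv0_def
    proof (intro allI impI)
      fix \<epsilon> :: real assume "\<epsilon> > 0"
      then have "finite {n. \<bar>e n\<bar> \<ge> \<epsilon>}" using finite_inv_le[of \<epsilon>] unfolding e_def by simp
      then show "{n. \<bar>e n\<bar> \<ge> \<epsilon>} \<in> I" using ideal_fin[OF I] by blast
    qed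
    fix y assume y: "y \<in> topspace X"
    have "{n. \<bar>f n y\<bar> \<ge> e n} \<subseteq> {n. f n y \<noteq> 0}"
    proof
      fix n assume "n \<in> {n. \<bar>f n y\<bar> \<ge> e n}"
      moreover have "e n > 0" unfolding e_def by simp
      ultimately show "n \<in> {n. f n y \<noteq> 0}" by auto
    qed
    moreover have "finite {n. f n y \<noteq> 0}" using one[OF y] by (intro at_most_one_finite) blast
    ultimately show "{n. \<bar>f n y\<bar> \<ge> e n} \<in> I" using ideal_fin[OF I] finite_subset by blast
  qed
  define Xk where "Xk k = {y \<in> topspace X. \<forall>n. n \<noteq> k \<longrightarrow> f n y = 0}" for k
  have cover: "topspace X = (\<Union>k. Xk k)"
  proof
    show "(\<Union>k. Xk k) \<subseteq> topspace X" unfolding Xk_def by auto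
    show "topspace X \<subseteq> (\<Union>k. Xk k)"
    proof
      fix y assume y: "y \<in> topspace X"
      show "y \<in> (\<Union>k. Xk k)"
      proof (cases "\<exists>n. f n y \<noteq> 0")
        case True
        then obtain k where k: "f k y \<noteq> 0" by blast
        have "y \<in> Xk k" unfolding Xk_def using y one[OF y _ k] by blast
        then show ?thesis by blast
      next
        case False
        then have "y \<in> Xk 0" unfolding Xk_def using y by blast
        then show ?thesis by blast
      qed
    qed
  qed
  have su: "I_sigma_uniform0 I (topspace X) f"
    unfolding I_sigma_uniform0_def
  proof (intro exI[of _ Xk] conjI allI)
    show "topspace X = (\<Union>k. Xk k)" by (rule cover)
    fix k show "I_uniform0 I (Xk k) f" unfolding I_uniform0_def
    proof (intro allI impI)
      fix \<epsilon> :: real assume e: "\<epsilon> > 0"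
      have "{n. \<exists>y\<in>Xk k. \<bar>f n y\<bar> \<ge> \<epsilon>} \<subseteq> {k}"
      proof
        fix n assume "n \<in> {n. \<exists>y\<in>Xk k. \<bar>f n y\<bar> \<ge> \<epsilon>}"
        then obtain y where "y \<in> Xk k" "\<bar>f n y\<bar> \<ge> \<epsilon>" by blast
        then show "n \<in> {k}" unfolding Xk_def using e by auto
      qed
      then show "{n. \<exists>y\<in>Xk k. \<bar>f n y\<bar> \<ge> \<epsilon>} \<in> I" using ideal_fin[OF I] finite_subset by blast
    qed
  qed
  have nu: "\<not> I_uniform0 J (topspace X) f"
  proof
    assume "I_uniform0 J (topspace X) f"
    then have "{n. \<exists>y\<in>topspace X. \<bar>f n y\<bar> \<ge> 1} \<in> J" unfolding I_uniform0_def by simp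
    moreover have "\<forall>n. \<exists>y\<in>topspace X. \<bar>f n y\<bar> \<ge> 1" using xT f(2) by (metis abs_one order_refl)
    then have "{n. \<exists>y\<in>topspace X. \<bar>f n y\<bar> \<ge> 1} = UNIV" by blast
    ultimately show False using ideal_UNIV[OF J] by simp
  qed
  show ?thesis using f(1) qn su nu by blast
qed

lemma inclusion_counter:
  assumes I: "ideal_on_nat I" and A: "A \<in> I" and ne: "topspace X \<noteq> {}"
  defines "f \<equiv> (\<lambda>n (y::'a). if n \<in> A then 1 else (0::real))"
  shows "(\<forall>n. continuous_map X euclideanreal (f n)) \<and>
           I_quasi_normal0 I (topspace X) f \<and> I_sigma_uniform0 I (topspace X) f \<and>
           (I_uniform0 J (topspace X) f \<longrightarrow> A \<in> J)"
proof (intro conjI impI allI)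
  show "continuous_map X euclideanreal (f n)" for n unfolding f_def by simp
  define e where "e n = (if n \<in> A then 1 else 1 / (real n + 1))" for n
  show "I_quasi_normal0 I (topspace X) f"
    unfolding I_quasi_normal0_def
  proof (intro exI[of _ e] conjI allI ballI)
    show "e n > 0" for n unfolding e_def by simp
    show "I_conv0 I e" unfolding I_conv0_def
    proof (intro allI impI)
      fix \<epsilon> :: real assume "\<epsilon> > 0"
      then have "{n. 1 / (real n + 1) \<ge> \<epsilon>} \<in> I" using finite_inv_le[of \<epsilon>] ideal_fin[OF I] by blast
      moreover have "{n. \<bar>e n\<bar> \<ge> \<epsilon>} \<subseteq> A \<union> {n. 1 / (real n + 1) \<ge> \<epsilon>}" unfolding e_def by auto
      ultimately show "{n. \<bar>e n\<bar> \<ge> \<epsilon>} \<in> I" using ideal_sub[OF I ideal_union[OF I A]] by blast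
    qed
    fix y
    have "{n. \<bar>f n y\<bar> \<ge> e n} \<subseteq> A"
    proof
      fix n assume "n \<in> {n. \<bar>f n y\<bar> \<ge> e n}"
      moreover have "e n > 0" unfolding e_def by simp
      ultimately show "n \<in> A" unfolding f_def by (auto split: if_splits)
    qed
    then show "{n. \<bar>f n y\<bar> \<ge> e n} \<in> I" using ideal_sub[OF I A] by blast
  qed
  show "I_sigma_uniform0 I (topspace X) f"
    unfolding I_sigma_uniform0_def
  proof (intro exI[of _ "\<lambda>k. topspace X"] conjI allI)
    show "topspace X = (\<Union>k. topspace X)" by simp
    fix k show "I_uniform0 I (topspace X) f" unfolding I_uniform0_def
    proof (intro allI impI)
      fix \<epsilon> :: real assume e: "\<epsilon> > 0"
      have "{n. \<exists>y\<in>topspace X. \<bar>f n y\<bar> \<ge> \<epsilon>} \<subseteq> A" unfolding f_def using e by auto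
      then show "{n. \<exists>y\<in>topspace X. \<bar>f n y\<bar> \<ge> \<epsilon>} \<in> I" using ideal_sub[OF I A] by blast
    qed
  qed
  assume "I_uniform0 J (topspace X) f"
  then have "{n. \<exists>y\<in>topspace X. \<bar>f n y\<bar> \<ge> 1} \<in> J" unfolding I_uniform0_def by simp
  moreover obtain y0 where y0: "y0 \<in> topspace X" using ne by blast
  then have "{n. \<exists>y\<in>topspace X. \<bar>f n y\<bar> \<ge> 1} = A" unfolding f_def by auto
  ultimately show "A \<in> J" by simp
qed

theorem proposition3p3:
  fixes I J :: "nat set set" and X :: "'a topology"
  assumes "ideal_on_nat I" and "ideal_on_nat J"
    and "normal_T2_space X" and "topspace X \<noteq> {}"
  shows "((finite (topspace X) \<and> I \<subseteq> J) \<longleftrightarrow>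
           (\<forall>f :: nat \<Rightarrow> 'a \<Rightarrow> real. (\<forall>n. continuous_map X euclideanreal (f n)) \<longrightarrow>
              I_pointwise0 I (topspace X) f \<longrightarrow> I_uniform0 J (topspace X) f))
       \<and> ((finite (topspace X) \<and> I \<subseteq> J) \<longleftrightarrow>
           (\<forall>f :: nat \<Rightarrow> 'a \<Rightarrow> real. (\<forall>n. continuous_map X euclideanreal (f n)) \<longrightarrow>
              I_quasi_normal0 I (topspace X) f \<longrightarrow> I_uniform0 J (topspace X) f))
       \<and> ((finite (topspace X) \<and> I \<subseteq> J) \<longleftrightarrow>
           (\<forall>f :: nat \<Rightarrow> 'a \<Rightarrow> real. (\<forall>n. continuous_map X euclideanreal (f n)) \<longrightarrow>
              I_sigma_uniform0 I (topspace X) f \<longrightarrow> I_uniform0 J (topspace X) f))"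
proof -
  let ?T = "topspace X"
  let ?P = "finite ?T \<and> I \<subseteq> J"
  let ?C = "\<lambda>f :: nat \<Rightarrow> 'a \<Rightarrow> real. \<forall>n. continuous_map X euclideanreal (f n)"
  have H: "Hausdorff_space X" and N: "normal_space X" using assms(3) unfolding normal_T2_space_def by auto
  have A: "?P \<Longrightarrow> ?C f \<Longrightarrow> I_pointwise0 I ?T f \<Longrightarrow> I_uniform0 J ?T f" for f
    using fin_unif[OF assms(1)] by blast
  have B: "?P" if Q: "\<forall>f. ?C f \<longrightarrow> I_quasi_normal0 I ?T f \<longrightarrow> I_uniform0 J ?T f"
  proof
    show "finite ?T"
    proof (rule ccontr)
      assume "infinite ?T"
      then show False using infinite_counter[OF assms(1,2) H N] Q by blast
    qed
    show "I \<subseteq> J"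
    proof
      fix A assume "A \<in> I"
      then show "A \<in> J" using inclusion_counter[OF assms(1) _ assms(4), of A J]
        spec[OF Q, of "\<lambda>n y. if n \<in> A then 1 else 0"] by blast
    qed
  qed
  have C: "?P" if Q: "\<forall>f. ?C f \<longrightarrow> I_sigma_uniform0 I ?T f \<longrightarrow> I_uniform0 J ?T f"
  proof
    show "finite ?T"
    proof (rule ccontr)
      assume "infinite ?T"
      then show False using infinite_counter[OF assms(1,2) H N] Q by blast
    qed
    show "I \<subseteq> J"
    proof
      fix A assume "A \<in> I"
      then show "A \<in> J" using inclusion_counter[OF assms(1) _ assms(4), of A J]
        spec[OF Q, of "\<lambda>n y. if n \<in> A then 1 else 0"] by blast
    qed
  qed
  have 1: "?P \<longleftrightarrow> (\<forall>f. ?C f \<longrightarrow> I_pointwise0 I ?T f \<longrightarrow> I_uniform0 J ?T f)"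
  proof
    assume "?P" then show "\<forall>f. ?C f \<longrightarrow> I_pointwise0 I ?T f \<longrightarrow> I_uniform0 J ?T f" using A by blast
  next
    assume Q: "\<forall>f. ?C f \<longrightarrow> I_pointwise0 I ?T f \<longrightarrow> I_uniform0 J ?T f"
    show ?P by (rule B) (use Q qn_pw[OF assms(1)] in blast)
  qed
  have 2: "?P \<longleftrightarrow> (\<forall>f. ?C f \<longrightarrow> I_quasi_normal0 I ?T f \<longrightarrow> I_uniform0 J ?T f)"
  proof
    assume "?P" then show "\<forall>f. ?C f \<longrightarrow> I_quasi_normal0 I ?T f \<longrightarrow> I_uniform0 J ?T f"
      using A qn_pw[OF assms(1)] by blast
  next
    assume "\<forall>f. ?C f \<longrightarrow> I_quasi_normal0 I ?T f \<longrightarrow> I_uniform0 J ?T f"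
    then show ?P by (rule B)
  qed
  have 3: "?P \<longleftrightarrow> (\<forall>f. ?C f \<longrightarrow> I_sigma_uniform0 I ?T f \<longrightarrow> I_uniform0 J ?T f)"
  proof
    assume "?P" then show "\<forall>f. ?C f \<longrightarrow> I_sigma_uniform0 I ?T f \<longrightarrow> I_uniform0 J ?T f"
      using A su_pw[OF assms(1)] by blast
  next
    assume "\<forall>f. ?C f \<longrightarrow> I_sigma_uniform0 I ?T f \<longrightarrow> I_uniform0 J ?T f"
    then show ?P by (rule C)
  qed
  show ?thesis using 1 2 3 by blast
qed

end
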